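(* Consider an ordered linear probing hash table with $n$ slots in some initial state, and a sequence $S$ of insertions and deletions applied to it. If there exists an interval $P=[r,s-1]$ with insertion surplus $q$, then the crossing number satisfies $c_s\ge q$.
   Context: Ordered linear probing with tombstones: the table has slots $1,\dots,n$; each slot holds a key, a tombstone, or is free. A hash function $h$ maps keys to $[n]$; a tombstone's hash is that of the deleted key that created it. Keys/tombstones within each maximal run of non-free slots are stored in hash order. Deletion replaces the key by a tombstone. Insertion of $u$ places $u$ at its hash-order position $j$ in the run (scanning from $h(u)$) and shifts positions $j,j+1,\dots$ right by one until reaching a tombstone or free slot, which it uses. The crossing number $c_i$ is the number of insertions in $S$ with hash smaller than $i$ that either use a tombstone with hash at least $i$ or use a free slot in position at least $i$. For an interval $P$, $S_P=\{u\in S:h(u)\in P\}$; a subset $S'\subseteq S_P$ is downward-closed if for every $u\in S'$, every $v\in S_P$ occurring temporally before $u$ with $h(v)\ge h(u)$ is in $S'$; its insertion surplus is $\max(0,\#\text{insertions}-\#\text{deletions in }S')$. The insertion surplus of $P$ is the maximum insertion surplus of a downward-closed subset of $S_P$ minus the number of free slots initially in $P$.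
   Formalization: The initial state contains no tombstones, insertions run past slot n into initially free overflow slots instead of wrapping around, and an inserted key precedes stored items of equal hash. Apart from conventions, each condition added here is assumed in the paper as well or is needed for the statement above to hold. *)

theory Defs
  imports Main
begin

text \<open>Slots are indexed by natural numbers;
  the table proper consists of slots 1..n, slots beyond n are initially free and
  only serve as overflow area (no wrap-around).\<close>

datatype 'k cell = Free | Key 'k | Tomb nat

datatype 'k op = Ins 'k | Del 'k

type_synonym 'k table = "nat \<Rightarrow> 'k cell"

fun chash :: "('k \<Rightarrow> nat) \<Rightarrow> 'k cell \<Rightarrow> nat" where
  "chash h (Key k) = h k"
| "chash h (Tomb x) = x"
| "chash h Free = 0"

fun is_tomb :: "'k cell \<Rightarrow> bool" where
  "is_tomb (Tomb _) = True"
| "is_tomb _ = False"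

fun op_key :: "'k op \<Rightarrow> 'k" where
  "op_key (Ins u) = u"
| "op_key (Del u) = u"

fun is_ins :: "'k op \<Rightarrow> bool" where
  "is_ins (Ins _) = True"
| "is_ins (Del _) = False"

definition ins_pos :: "('k \<Rightarrow> nat) \<Rightarrow> 'k table \<Rightarrow> 'k \<Rightarrow> nat" where
  "ins_pos h T u = (LEAST p. h u \<le> p \<and> (T p = Free \<or> h u \<le> chash h (T p)))"

definition ins_end :: "('k \<Rightarrow> nat) \<Rightarrow> 'k table \<Rightarrow> 'k \<Rightarrow> nat" where
  "ins_end h T u = (LEAST p. ins_pos h T u \<le> p \<and> (T p = Free \<or> is_tomb (T p)))"

definition insert_tbl :: "('k \<Rightarrow> nat) \<Rightarrow> 'k table \<Rightarrow> 'k \<Rightarrow> 'k table" where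
  "insert_tbl h T u = (\<lambda>p. let j = ins_pos h T u; e = ins_end h T u in
      if p < j \<or> e < p then T p else if p = j then Key u else T (p - 1))"

definition delete_tbl :: "('k \<Rightarrow> nat) \<Rightarrow> 'k table \<Rightarrow> 'k \<Rightarrow> 'k table" where
  "delete_tbl h T u = (\<lambda>p. if T p = Key u then Tomb (h u) else T p)"

fun step :: "('k \<Rightarrow> nat) \<Rightarrow> 'k table \<Rightarrow> 'k op \<Rightarrow> 'k table" where
  "step h T (Ins u) = insert_tbl h T u"
| "step h T (Del u) = delete_tbl h T u"

text \<open>State just before the t-th operation (0-based) of S.\<close>
definition state_before :: "('k \<Rightarrow> nat) \<Rightarrow> 'k table \<Rightarrow> 'k op list \<Rightarrow> nat \<Rightarrow> 'k table" where
  "state_before h T0 S t = foldl (step h) T0 (take t S)"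

definition in_table :: "'k table \<Rightarrow> 'k \<Rightarrow> bool" where
  "in_table T u = (\<exists>p. T p = Key u)"

definition valid_ops :: "('k \<Rightarrow> nat) \<Rightarrow> 'k table \<Rightarrow> 'k op list \<Rightarrow> bool" where
  "valid_ops h T0 S = (\<forall>t < length S. case S ! t of
      Ins u \<Rightarrow> \<not> in_table (state_before h T0 S t) u
    | Del u \<Rightarrow> in_table (state_before h T0 S t) u)"

definition valid_init :: "nat \<Rightarrow> ('k \<Rightarrow> nat) \<Rightarrow> 'k table \<Rightarrow> bool" where
  "valid_init n h T =
    ((\<forall>p. (p = 0 \<or> n < p) \<longrightarrow> T p = Free)
     \<and> (\<forall>p. \<not> is_tomb (T p))
     \<and> (\<forall>p q k. T p = Key k \<longrightarrow> T q = Key k \<longrightarrow> p = q)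
     \<and> (\<forall>p. T p \<noteq> Free \<longrightarrow> chash h (T p) \<le> p \<and> (\<forall>q. chash h (T p) \<le> q \<and> q \<le> p \<longrightarrow> T q \<noteq> Free))
     \<and> (\<forall>p. T p \<noteq> Free \<longrightarrow> T (Suc p) \<noteq> Free \<longrightarrow> chash h (T p) \<le> chash h (T (Suc p))))"

definition crossing :: "('k \<Rightarrow> nat) \<Rightarrow> 'k table \<Rightarrow> 'k op list \<Rightarrow> nat \<Rightarrow> nat" where
  "crossing h T0 S i = card {t. t < length S \<and> is_ins (S ! t) \<and> h (op_key (S ! t)) < i \<and>
      (let T = state_before h T0 S t; u = op_key (S ! t); e = ins_end h T u in
        (is_tomb (T e) \<and> i \<le> chash h (T e)) \<or> (T e = Free \<and> i \<le> e))}"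

text \<open>S_P for P = [r, s-1], as a set of indices (occurrences) into S.\<close>
definition S_P :: "('k \<Rightarrow> nat) \<Rightarrow> 'k op list \<Rightarrow> nat \<Rightarrow> nat \<Rightarrow> nat set" where
  "S_P h S r s = {t. t < length S \<and> r \<le> h (op_key (S ! t)) \<and> h (op_key (S ! t)) < s}"

definition downward_closed :: "('k \<Rightarrow> nat) \<Rightarrow> 'k op list \<Rightarrow> nat \<Rightarrow> nat \<Rightarrow> nat set \<Rightarrow> bool" where
  "downward_closed h S r s S' = (S' \<subseteq> S_P h S r s \<and>
     (\<forall>t\<in>S'. \<forall>t'\<in>S_P h S r s. t' < t \<and> h (op_key (S ! t)) \<le> h (op_key (S ! t')) \<longrightarrow> t' \<in> S'))"

definition subset_surplus :: "'k op list \<Rightarrow> nat set \<Rightarrow> int" where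
  "subset_surplus S S' = max 0 (int (card {t\<in>S'. is_ins (S ! t)}) - int (card {t\<in>S'. \<not> is_ins (S ! t)}))"

definition insertion_surplus :: "('k \<Rightarrow> nat) \<Rightarrow> 'k table \<Rightarrow> 'k op list \<Rightarrow> nat \<Rightarrow> nat \<Rightarrow> int" where
  "insertion_surplus h T0 S r s =
     Max (subset_surplus S ` {S'. downward_closed h S r s S'})
     - int (card {p. r \<le> p \<and> p < s \<and> T0 p = Free})"

end

theory Submission
  imports Defs
begin


definition tinv :: "('k \<Rightarrow> nat) \<Rightarrow> 'k table \<Rightarrow> bool" where
 "tinv h T = (finite {p. T p \<noteq> Free}
   \<and> (\<forall>p. T p \<noteq> Free \<longrightarrow> chash h (T p) \<le> p \<and> (\<forall>q. chash h (T p) \<le> q \<and> q \<le> p \<longrightarrow> T q \<noteq> Free))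
   \<and> (\<forall>p. T p \<noteq> Free \<longrightarrow> T (Suc p) \<noteq> Free \<longrightarrow> chash h (T p) \<le> chash h (T (Suc p)))
   \<and> (\<forall>p q k. T p = Key k \<longrightarrow> T q = Key k \<longrightarrow> p = q))"

lemma free_exists:
  fixes T :: "'k table"
  assumes "finite {p. T p \<noteq> Free}" shows "\<exists>p\<ge>a. T p = Free"
proof -
  from finite_nat_set_iff_bounded_le[THEN iffD1, OF assms]
  obtain N where N: "\<forall>p\<in>{p. T p \<noteq> Free}. p \<le> N" by (elim exE)
  have nl: "\<not> (max a (Suc N) \<le> N)" by simp
  have fr: "T (max a (Suc N)) = Free" using N nl by blast
  show ?thesis using fr max.cobounded1[of a "Suc N"] by blast
qed

lemma ins_pos_props:
  fixes T :: "'k table"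
  assumes "finite {p. T p \<noteq> Free}"
  shows "h u \<le> ins_pos h T u"
    and "T (ins_pos h T u) = Free \<or> h u \<le> chash h (T (ins_pos h T u))"
    and "\<And>p. h u \<le> p \<Longrightarrow> p < ins_pos h T u \<Longrightarrow> T p \<noteq> Free \<and> chash h (T p) < h u"
proof -
  obtain p where p: "p \<ge> h u" "T p = Free" using free_exists[OF assms] by blast
  have ex: "\<exists>p. h u \<le> p \<and> (T p = Free \<or> h u \<le> chash h (T p))" using p by blast
  show "h u \<le> ins_pos h T u" "T (ins_pos h T u) = Free \<or> h u \<le> chash h (T (ins_pos h T u))"
    using LeastI_ex[OF ex] unfolding ins_pos_def by auto
  fix p assume "h u \<le> p" "p < ins_pos h T u"
  then show "T p \<noteq> Free \<and> chash h (T p) < h u"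
    using not_less_Least[of p "\<lambda>p. h u \<le> p \<and> (T p = Free \<or> h u \<le> chash h (T p))"]
    unfolding ins_pos_def by auto
qed

lemma ins_end_props:
  fixes T :: "'k table"
  assumes "finite {p. T p \<noteq> Free}"
  shows "ins_pos h T u \<le> ins_end h T u"
    and "T (ins_end h T u) = Free \<or> is_tomb (T (ins_end h T u))"
    and "\<And>p. ins_pos h T u \<le> p \<Longrightarrow> p < ins_end h T u \<Longrightarrow> T p \<noteq> Free \<and> \<not> is_tomb (T p)"
proof -
  obtain p where p: "p \<ge> ins_pos h T u" "T p = Free" using free_exists[OF assms] by blast
  have ex: "\<exists>p. ins_pos h T u \<le> p \<and> (T p = Free \<or> is_tomb (T p))" using p by blast
  show "ins_pos h T u \<le> ins_end h T u" "T (ins_end h T u) = Free \<or> is_tomb (T (ins_end h T u))"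
    using LeastI_ex[OF ex] unfolding ins_end_def by auto
  fix p assume "ins_pos h T u \<le> p" "p < ins_end h T u"
  then show "T p \<noteq> Free \<and> \<not> is_tomb (T p)"
    using not_less_Least[of p "\<lambda>p. ins_pos h T u \<le> p \<and> (T p = Free \<or> is_tomb (T p))"]
    unfolding ins_end_def by auto
qed

lemma ins_tbl_cases:
  "p < ins_pos h T u \<Longrightarrow> insert_tbl h T u p = T p"
  "ins_end h T u < p \<Longrightarrow> insert_tbl h T u p = T p"
  "ins_pos h T u \<le> ins_end h T u \<Longrightarrow> insert_tbl h T u (ins_pos h T u) = Key u"
  "ins_pos h T u < p \<Longrightarrow> p \<le> ins_end h T u \<Longrightarrow> insert_tbl h T u p = T (p - 1)"
  unfolding insert_tbl_def Let_def by auto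

lemma tomb_hash:
  assumes inv: "tinv h T"
  shows "T (ins_end h T u) \<noteq> Free \<Longrightarrow> h u \<le> chash h (T (ins_end h T u))"
proof -
  let ?j = "ins_pos h T u" and ?e = "ins_end h T u"
  have fin: "finite {p. T p \<noteq> Free}" using inv unfolding tinv_def by blast
  have ord: "\<And>p. T p \<noteq> Free \<Longrightarrow> T (Suc p) \<noteq> Free \<Longrightarrow> chash h (T p) \<le> chash h (T (Suc p))"
    using inv unfolding tinv_def by blast
  note J = ins_pos_props[OF fin, of h u] and E = ins_end_props[OF fin, of h u]
  have "\<And>k. ?j + k \<le> ?e \<Longrightarrow> T (?j + k) \<noteq> Free \<Longrightarrow> h u \<le> chash h (T (?j + k))"
  proof -
    fix k show "?j + k \<le> ?e \<Longrightarrow> T (?j + k) \<noteq> Free \<Longrightarrow> h u \<le> chash h (T (?j + k))"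
    proof (induction k)
      case 0 then show ?case using J(2) by auto
    next
      case (Suc k)
      have k: "T (?j + k) \<noteq> Free" using E(3)[of "?j + k"] Suc.prems by auto
      have "h u \<le> chash h (T (?j + k))" using Suc.IH Suc.prems k by auto
      also have "\<dots> \<le> chash h (T (Suc (?j + k)))" using ord[OF k] Suc.prems by auto
      finally show ?case by simp
    qed
  qed
  from this[of "?e - ?j"] E(1) show "T ?e \<noteq> Free \<Longrightarrow> h u \<le> chash h (T ?e)" by auto
qed



lemma insert_inv:
  assumes inv: "tinv h T" and abs: "\<forall>p. T p \<noteq> Key u"
  shows "tinv h (insert_tbl h T u)"
proof -
  let ?j = "ins_pos h T u" and ?e = "ins_end h T u" and ?T = "insert_tbl h T u"
  have fin: "finite {p. T p \<noteq> Free}" using inv unfolding tinv_def by blast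
  have run: "\<And>p. T p \<noteq> Free \<Longrightarrow> chash h (T p) \<le> p \<and> (\<forall>q. chash h (T p) \<le> q \<and> q \<le> p \<longrightarrow> T q \<noteq> Free)"
    using inv unfolding tinv_def by blast
  have ord: "\<And>p. T p \<noteq> Free \<Longrightarrow> T (Suc p) \<noteq> Free \<Longrightarrow> chash h (T p) \<le> chash h (T (Suc p))"
    using inv unfolding tinv_def by blast
  have dis: "\<And>p q k. T p = Key k \<Longrightarrow> T q = Key k \<Longrightarrow> p = q"
    using inv unfolding tinv_def by blast
  note J = ins_pos_props[OF fin, of h u] and E = ins_end_props[OF fin, of h u]
  note C = ins_tbl_cases[where h=h and T=T and u=u]
  have C3: "?T ?j = Key u" using C(3) E(1) by blast
  have key: "\<And>p. ?j \<le> p \<Longrightarrow> p < ?e \<Longrightarrow> \<exists>k. T p = Key k"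
    using E(3) by (metis cell.exhaust is_tomb.simps(1))
  have nf_in: "\<And>p. ?j \<le> p \<Longrightarrow> p \<le> ?e \<Longrightarrow> ?T p \<noteq> Free"
  proof -
    fix p assume "?j \<le> p" "p \<le> ?e"
    then show "?T p \<noteq> Free"
      using C3 C(4)[of p] E(3)[of "p-1"] by (cases "p = ?j") auto
  qed
  have nf_mono: "\<And>p. T p \<noteq> Free \<Longrightarrow> ?T p \<noteq> Free"
  proof -
    fix p assume "T p \<noteq> Free"
    then show "?T p \<noteq> Free"
      using C(1)[of p] C(2)[of p] nf_in[of p] by (cases "p < ?j \<or> ?e < p") auto
  qed
  have nfset: "{p. ?T p \<noteq> Free} \<subseteq> {p. T p \<noteq> Free} \<union> {?j..?e}"
    using C(1) C(2) by (force simp: not_less)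
  have i1: "finite {p. ?T p \<noteq> Free}" using finite_subset[OF nfset] fin by blast
  have i2: "\<forall>p. ?T p \<noteq> Free \<longrightarrow> chash h (?T p) \<le> p \<and> (\<forall>q. chash h (?T p) \<le> q \<and> q \<le> p \<longrightarrow> ?T q \<noteq> Free)"
  proof (intro allI impI)
    fix p assume nf: "?T p \<noteq> Free"
    consider (a) "p < ?j \<or> ?e < p" | (b) "p = ?j" | (c) "?j < p" "p \<le> ?e" by linarith
    then show "chash h (?T p) \<le> p \<and> (\<forall>q. chash h (?T p) \<le> q \<and> q \<le> p \<longrightarrow> ?T q \<noteq> Free)"
    proof cases
      case a
      then have "?T p = T p" using C(1) C(2) by blast
      then show ?thesis using run[of p] nf nf_mono by auto
    next
      case b
      have "\<forall>q. h u \<le> q \<and> q \<le> p \<longrightarrow> ?T q \<noteq> Free"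
      proof (intro allI impI)
        fix q assume q: "h u \<le> q \<and> q \<le> p"
        show "?T q \<noteq> Free"
        proof (cases "q = ?j")
          case True then show ?thesis using C3 by simp
        next
          case False then show ?thesis using J(3)[of q] q b nf_mono by auto
        qed
      qed
      then show ?thesis using b C3 J(1) by simp
    next
      case c
      have tp: "?T p = T (p - 1)" using C(4) c by blast
      have nf1: "T (p - 1) \<noteq> Free" using E(3)[of "p-1"] c by auto
      have "\<forall>q. chash h (T (p-1)) \<le> q \<and> q \<le> p \<longrightarrow> ?T q \<noteq> Free"
      proof (intro allI impI)
        fix q assume q: "chash h (T (p-1)) \<le> q \<and> q \<le> p"
        show "?T q \<noteq> Free"
        proof (cases "q = p")
          case True then show ?thesis using nf by simp
        next
          case False then show ?thesis using run[OF nf1] q nf_mono by auto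
        qed
      qed
      then show ?thesis using tp run[OF nf1] by auto
    qed
  qed
  have i3: "\<forall>p. ?T p \<noteq> Free \<longrightarrow> ?T (Suc p) \<noteq> Free \<longrightarrow> chash h (?T p) \<le> chash h (?T (Suc p))"
  proof (intro allI impI)
    fix p assume nf: "?T p \<noteq> Free" and nf': "?T (Suc p) \<noteq> Free"
    consider (a) "Suc p < ?j" | (b) "Suc p = ?j" | (c) "p = ?j" | (d) "?j < p" "Suc p \<le> ?e"
      | (e) "?j < p" "p = ?e" | (f) "?e < p" by linarith
    then show "chash h (?T p) \<le> chash h (?T (Suc p))"
    proof cases
      case a then show ?thesis using C(1)[of p] C(1)[of "Suc p"] ord nf nf' by auto
    next
      case b
      have tp: "?T p = T p" using C(1) b by auto
      have "chash h (T p) \<le> h u"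
      proof (cases "h u \<le> p")
        case True then show ?thesis using J(3)[of p] b by auto
      next
        case False then show ?thesis using run[of p] nf tp by auto
      qed
      then show ?thesis using tp b C3 by simp
    next
      case c
      show ?thesis
      proof (cases "?j < ?e")
        case True
        have "?T (Suc p) = T ?j" using C(4)[of "Suc p"] c True by auto
        moreover have "T ?j \<noteq> Free" using E(3)[of ?j] True by auto
        ultimately show ?thesis using J(2) C3 c by auto
      next
        case False
        then have ee: "?e = ?j" using E(1) by auto
        have ts: "?T (Suc p) = T (Suc p)" using C(2)[of "Suc p"] c ee by auto
        have nfs: "T (Suc p) \<noteq> Free" using ts nf' by simp
        show ?thesis
        proof (cases "T ?j = Free")
          case True
          have "\<not> chash h (T (Suc p)) \<le> p" using run[OF nfs] True c by auto
          then show ?thesis using ts C3 c J(1) by simp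
        next
          case False
          have "h u \<le> chash h (T ?j)" using J(2) False by auto
          also have "\<dots> \<le> chash h (T (Suc ?j))" using ord[OF False] nfs c by simp
          finally show ?thesis using ts C3 c by simp
        qed
      qed
    next
      case d
      have "?T p = T (p - 1)" "?T (Suc p) = T p" using C(4)[of p] C(4)[of "Suc p"] d by auto
      moreover have "T (p-1) \<noteq> Free" "T p \<noteq> Free" using E(3)[of "p-1"] E(3)[of p] d by auto
      ultimately show ?thesis using ord[of "p-1"] d by (simp add: Suc_diff_1 less_imp_le_nat)
    next
      case e
      have tp: "?T p = T (p - 1)" using C(4)[of p] e by auto
      have ts: "?T (Suc p) = T (Suc p)" using C(2)[of "Suc p"] e by auto
      have nfp: "T (p-1) \<noteq> Free" using E(3)[of "p-1"] e by auto
      have nfs: "T (Suc p) \<noteq> Free" using ts nf' by simp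
      show ?thesis
      proof (cases "T p = Free")
        case True
        have "\<not> chash h (T (Suc p)) \<le> p" using run[OF nfs] True by auto
        moreover have "chash h (T (p-1)) \<le> p - 1" using run[OF nfp] by simp
        ultimately show ?thesis using tp ts by simp
      next
        case False
        have "chash h (T (p-1)) \<le> chash h (T p)" using ord[OF nfp] False e by (simp add: Suc_diff_1 less_imp_le_nat)
        also have "\<dots> \<le> chash h (T (Suc p))" using ord[OF False nfs] .
        finally show ?thesis using tp ts by simp
      qed
    next
      case f then show ?thesis using C(2)[of p] C(2)[of "Suc p"] ord nf nf' by auto
    qed
  qed
  define orig where "orig p = (if p < ?j \<or> ?e < p then p else p - 1)" for p
  have Tq: "\<And>p. p \<noteq> ?j \<Longrightarrow> ?T p = T (orig p)"
  proof -
    fix p assume pj: "p \<noteq> ?j"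
    show "?T p = T (orig p)"
    proof (cases "p < ?j \<or> ?e < p")
      case True then show ?thesis unfolding orig_def using C(1) C(2) by auto
    next
      case False then have "?j < p" "p \<le> ?e" using pj by auto
      then show ?thesis unfolding orig_def using C(4) by auto
    qed
  qed
  have oinj: "\<And>p q. p \<noteq> ?j \<Longrightarrow> q \<noteq> ?j \<Longrightarrow> orig p = orig q \<Longrightarrow> p = q"
    unfolding orig_def using E(1) by (auto split: if_splits)
  have i4: "\<forall>p q k. ?T p = Key k \<longrightarrow> ?T q = Key k \<longrightarrow> p = q"
  proof (intro allI impI)
    fix p q k assume p: "?T p = Key k" and q: "?T q = Key k"
    show "p = q"
    proof (cases "p = ?j")
      case True
      then have "k = u" using p C3 by simp
      then show ?thesis using True q Tq[of q] abs by (cases "q = ?j") auto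
    next
      case False
      show ?thesis
      proof (cases "q = ?j")
        case True
        then have "k = u" using q C3 by simp
        then show ?thesis using False p Tq[of p] abs by auto
      next
        case False2: False
        have "T (orig p) = Key k" "T (orig q) = Key k" using p q Tq False False2 by auto
        then show ?thesis using dis oinj False False2 by blast
      qed
    qed
  qed
  show ?thesis unfolding tinv_def using i1 i2 i3 i4 by blast
qed

lemma delete_inv:
  assumes inv: "tinv h T"
  shows "tinv h (delete_tbl h T u)"
proof -
  let ?T = "delete_tbl h T u"
  have a: "\<And>p. (?T p \<noteq> Free) = (T p \<noteq> Free)" unfolding delete_tbl_def by auto
  have b: "\<And>p. chash h (?T p) = chash h (T p)" unfolding delete_tbl_def by auto
  have c: "\<And>p k. ?T p = Key k \<Longrightarrow> T p = Key k" unfolding delete_tbl_def by (auto split: if_splits)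
  have d: "\<And>p q k. ?T p = Key k \<Longrightarrow> ?T q = Key k \<Longrightarrow> p = q"
  proof -
    fix p q k assume "?T p = Key k" "?T q = Key k"
    then have "T p = Key k" "T q = Key k" using c by auto
    then show "p = q" using inv unfolding tinv_def by blast
  qed
  have "finite {p. ?T p \<noteq> Free}" using inv unfolding tinv_def a by blast
  moreover have "\<forall>p. ?T p \<noteq> Free \<longrightarrow> chash h (?T p) \<le> p \<and> (\<forall>q. chash h (?T p) \<le> q \<and> q \<le> p \<longrightarrow> ?T q \<noteq> Free)"
    using inv unfolding tinv_def a b by blast
  moreover have "\<forall>p. ?T p \<noteq> Free \<longrightarrow> ?T (Suc p) \<noteq> Free \<longrightarrow> chash h (?T p) \<le> chash h (?T (Suc p))"
    using inv unfolding tinv_def a b by blast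
  ultimately show ?thesis unfolding tinv_def using d by blast
qed



definition G :: "('k \<Rightarrow> nat) \<Rightarrow> 'k table \<Rightarrow> nat \<Rightarrow> nat \<Rightarrow> nat set" where
  "G h T x s = {p. (T p = Free \<and> x \<le> p \<and> p < s) \<or> (is_tomb (T p) \<and> x \<le> chash h (T p) \<and> chash h (T p) < s)}"

definition cr :: "('k \<Rightarrow> nat) \<Rightarrow> 'k table \<Rightarrow> 'k \<Rightarrow> nat \<Rightarrow> bool" where
  "cr h T u s = (let e = ins_end h T u in (is_tomb (T e) \<and> s \<le> chash h (T e)) \<or> (T e = Free \<and> s \<le> e))"

lemma G_fin: "finite {p. T p \<noteq> Free} \<Longrightarrow> finite (G h T x s)"
proof -
  assume f: "finite {p. T p \<noteq> Free}"
  have "G h T x s \<subseteq> {..<s} \<union> {p. T p \<noteq> Free}" unfolding G_def by (auto elim: is_tomb.elims)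
  then show ?thesis using f finite_subset by blast
qed

lemma G_mono: "x \<le> y \<Longrightarrow> G h T y s \<subseteq> G h T x s"
  unfolding G_def by auto

lemma key_notG: "T p = Key k \<Longrightarrow> p \<notin> G h T x s"
  unfolding G_def by auto

lemma G_insert:
  assumes inv: "tinv h T"
  shows "G h (insert_tbl h T u) x s = G h T x s - {ins_end h T u}"
proof -
  let ?j = "ins_pos h T u" and ?e = "ins_end h T u" and ?T = "insert_tbl h T u"
  have fin: "finite {p. T p \<noteq> Free}" using inv unfolding tinv_def by blast
  note E = ins_end_props[OF fin, of h u]
  note C = ins_tbl_cases[where h=h and T=T and u=u]
  have key: "\<And>p. ?j \<le> p \<Longrightarrow> p < ?e \<Longrightarrow> \<exists>k. T p = Key k"
    using E(3) by (metis cell.exhaust is_tomb.simps(1))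
  have "\<And>p. (p \<in> G h ?T x s) = (p \<in> G h T x s - {?e})"
  proof -
    fix p
    consider (a) "p < ?j \<or> ?e < p" | (b) "p = ?j" | (c) "?j < p" "p \<le> ?e" by linarith
    then show "(p \<in> G h ?T x s) = (p \<in> G h T x s - {?e})"
    proof cases
      case a
      have "?T p = T p" using C(1) C(2) a by blast
      moreover have "p \<noteq> ?e" using a E(1) by auto
      ultimately show ?thesis unfolding G_def by simp
    next
      case b
      have "?T p = Key u" using b C(3) E(1) by simp
      then have "p \<notin> G h ?T x s" by (rule key_notG)
      moreover have "p \<notin> G h T x s - {?e}"
      proof (cases "?j < ?e")
        case True then obtain k where "T ?j = Key k" using key by blast
        then have "?j \<notin> G h T x s" by (rule key_notG)
        then show ?thesis using b by simp
      next
        case False then show ?thesis using b E(1) by auto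
      qed
      ultimately show ?thesis by blast
    next
      case c
      have c1: "?j \<le> p - 1" "p - 1 < ?e" using c by auto
      obtain k where k: "T (p - 1) = Key k" using key[OF c1] by blast
      have "?T p = T (p - 1)" using C(4) c by simp
      then have "?T p = Key k" using k by simp
      then have "p \<notin> G h ?T x s" by (rule key_notG)
      moreover have "p \<notin> G h T x s - {?e}"
      proof (cases "p < ?e")
        case True
        have c2: "?j \<le> p" using c by simp
        obtain k where "T p = Key k" using key[OF c2 True] by blast
        then have "p \<notin> G h T x s" by (rule key_notG)
        then show ?thesis by simp
      qed (use c in auto)
      ultimately show ?thesis by blast
    qed
  qed
  then show ?thesis by (rule set_eqI)
qed

lemma G_insert_mem:
  assumes inv: "tinv h T" and "x \<le> h u" and "h u < s" and "\<not> cr h T u s"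
  shows "ins_end h T u \<in> G h T x s"
proof -
  let ?j = "ins_pos h T u" and ?e = "ins_end h T u"
  have fin: "finite {p. T p \<noteq> Free}" using inv unfolding tinv_def by blast
  note E = ins_end_props[OF fin, of h u] and J = ins_pos_props[OF fin, of h u]
  show ?thesis
  proof (cases "T ?e = Free")
    case True
    then show ?thesis using assms(2,4) E(1) J(1) unfolding G_def cr_def Let_def by auto
  next
    case False
    then have "h u \<le> chash h (T ?e)" using tomb_hash[OF inv] by blast
    then show ?thesis using False E(2) assms(2,4) unfolding G_def cr_def Let_def by auto
  qed
qed

lemma G_delete:
  "G h (delete_tbl h T u) x s \<subseteq> G h T x s \<union> {p. T p = Key u \<and> x \<le> h u \<and> h u < s}"
  unfolding G_def delete_tbl_def by auto

lemma K_card: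
  assumes inv: "tinv h T"
  shows "card {p. T p = Key u \<and> x \<le> h u \<and> h u < s} \<le> 1"
proof -
  have dis: "\<And>p q k. T p = Key k \<Longrightarrow> T q = Key k \<Longrightarrow> p = q"
    using inv unfolding tinv_def by blast
  have fin: "finite {p. T p \<noteq> Free}" using inv unfolding tinv_def by blast
  have f2: "finite {p. T p = Key u \<and> x \<le> h u \<and> h u < s}"
    by (rule finite_subset[OF _ fin]) auto
  have "\<forall>a\<in>{p. T p = Key u \<and> x \<le> h u \<and> h u < s}. \<forall>b\<in>{p. T p = Key u \<and> x \<le> h u \<and> h u < s}. a = b"
    using dis by blast
  then show ?thesis using card_le_Suc0_iff_eq[OF f2] by simp
qed

lemma sbSuc: "t < length S \<Longrightarrow> state_before h T0 S (Suc t) = step h (state_before h T0 S t) (S ! t)"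
  unfolding state_before_def by (simp add: take_Suc_conv_app_nth)

lemma init_inv: "valid_init n h T0 \<Longrightarrow> tinv h T0"
proof -
  assume v: "valid_init n h T0"
  have "{p. T0 p \<noteq> Free} \<subseteq> {..n}"
  proof (rule subsetI)
    fix x assume "x \<in> {p. T0 p \<noteq> Free}"
    then have x: "T0 x \<noteq> Free" by simp
    have A: "\<forall>p. (p = 0 \<or> n < p) \<longrightarrow> T0 p = Free" using v unfolding valid_init_def by (elim conjE)
    have "\<not> n < x" using A x by blast
    then show "x \<in> {..n}" by simp
  qed
  then have "finite {p. T0 p \<noteq> Free}" using finite_subset by blast
  note w = v[unfolded valid_init_def]
  have C: "\<forall>p q k. T0 p = Key k \<longrightarrow> T0 q = Key k \<longrightarrow> p = q" using w by (elim conjE)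
  have D: "\<forall>p. T0 p \<noteq> Free \<longrightarrow> chash h (T0 p) \<le> p \<and> (\<forall>q. chash h (T0 p) \<le> q \<and> q \<le> p \<longrightarrow> T0 q \<noteq> Free)" using w by (elim conjE)
  have E: "\<forall>p. T0 p \<noteq> Free \<longrightarrow> T0 (Suc p) \<noteq> Free \<longrightarrow> chash h (T0 p) \<le> chash h (T0 (Suc p))" using w by (elim conjE)
  show ?thesis unfolding tinv_def using \<open>finite {p. T0 p \<noteq> Free}\<close> C D E by (intro conjI)
qed

lemma sb_inv:
  assumes "valid_init n h T0" "valid_ops h T0 S"
  shows "t \<le> length S \<Longrightarrow> tinv h (state_before h T0 S t)"
proof (induction t)
  case 0 then show ?case using init_inv[OF assms(1)] by (simp add: state_before_def)
next
  case (Suc t)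
  then have t: "t < length S" by simp
  have IH: "tinv h (state_before h T0 S t)" using Suc by simp
  show ?case
  proof (cases "S ! t")
    case (Ins u)
    have "case S ! t of Ins u \<Rightarrow> \<not> in_table (state_before h T0 S t) u
      | Del u \<Rightarrow> in_table (state_before h T0 S t) u" using assms(2) t unfolding valid_ops_def by blast
    then have "\<not> in_table (state_before h T0 S t) u" using Ins by simp
    then show ?thesis using insert_inv[OF IH] sbSuc[OF t] Ins unfolding in_table_def by auto
  next
    case (Del u)
    then show ?thesis using delete_inv[OF IH] sbSuc[OF t] by auto
  qed
qed

lemma cnt_Suc:
  assumes "finite A"
  shows "card {x\<in>A. x < Suc t \<and> P x} = card {x\<in>A. x < t \<and> P x} + (if t \<in> A \<and> P t then 1 else 0)"
proof (cases "t \<in> A \<and> P t")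
  case True
  then have "{x\<in>A. x < Suc t \<and> P x} = insert t {x\<in>A. x < t \<and> P x}" by auto
  then show ?thesis using True assms by simp
next
  case False
  then have "{x\<in>A. x < Suc t \<and> P x} = {x\<in>A. x < t \<and> P x}" using less_Suc_eq by auto
  then show ?thesis using False by simp
qed



theorem mainTheorem8:
  fixes n :: nat and h :: "'k \<Rightarrow> nat" and T0 :: "'k table" and S :: "'k op list"
    and r s :: nat and q :: int
  assumes "\<forall>k. 1 \<le> h k \<and> h k \<le> n"
    and "valid_init n h T0"
    and "valid_ops h T0 S"
    and "1 \<le> r" and "r \<le> s" and "s \<le> n + 1"
    and "insertion_surplus h T0 S r s = q"
  shows "int (crossing h T0 S s) \<ge> q"
proof -
  define SP where "SP = S_P h S r s"
  define Hs where "Hs t = h (op_key (S ! t))" for t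
  define st where "st t = state_before h T0 S t" for t
  have SPsub: "SP \<subseteq> {..<length S}" unfolding SP_def S_P_def by auto
  have finSP: "finite SP" using SPsub finite_subset by blast
  let ?DC = "{S'. downward_closed h S r s S'}"
  have DCsub: "?DC \<subseteq> Pow SP" unfolding SP_def downward_closed_def by auto
  have finDC: "finite ?DC" using DCsub finSP by (meson finite_Pow_iff finite_subset)
  have neDC: "{} \<in> ?DC" unfolding downward_closed_def by simp
  have "Max (subset_surplus S ` ?DC) \<in> subset_surplus S ` ?DC"
    by (rule Max_in) (use finDC neDC in auto)
  then obtain S' where dc: "downward_closed h S r s S'"
    and mx: "Max (subset_surplus S ` ?DC) = subset_surplus S S'" by auto
  have S'SP: "S' \<subseteq> SP" using dc unfolding downward_closed_def SP_def by blast
  have dcl: "\<And>t t'. t \<in> S' \<Longrightarrow> t' \<in> SP \<Longrightarrow> t' < t \<Longrightarrow> Hs t \<le> Hs t' \<Longrightarrow> t' \<in> S'"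
    using dc unfolding downward_closed_def SP_def Hs_def by blast
  have finS': "finite S'" using S'SP finSP finite_subset by blast
  have SPmem: "\<And>t. t \<in> SP \<Longrightarrow> t < length S \<and> r \<le> Hs t \<and> Hs t < s"
    unfolding SP_def S_P_def Hs_def by auto
  define f where "f = card {p. r \<le> p \<and> p < s \<and> T0 p = Free}"
  have qdef: "q = subset_surplus S S' - int f"
    using assms(7) mx unfolding insertion_surplus_def f_def by simp
  define I where "I = card {t\<in>S'. is_ins (S ! t)}"
  define D where "D = card {t\<in>S'. \<not> is_ins (S ! t)}"
  have ss: "subset_surplus S S' = max 0 (int I - int D)" unfolding subset_surplus_def I_def D_def by simp
  define crp where "crp t = cr h (st t) (op_key (S ! t)) s" for t
  define C where "C = card {t\<in>S'. is_ins (S ! t) \<and> crp t}"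
  define X where "X = {t. t < length S \<and> is_ins (S ! t) \<and> h (op_key (S ! t)) < s \<and>
      (let T = state_before h T0 S t; u = op_key (S ! t); e = ins_end h T u in
        (is_tomb (T e) \<and> s \<le> chash h (T e)) \<or> (T e = Free \<and> s \<le> e))}"
  have crX: "crossing h T0 S s = card X" unfolding crossing_def X_def by simp
  have Ccross: "C \<le> crossing h T0 S s"
  proof -
    have sub: "{t\<in>S'. is_ins (S ! t) \<and> crp t} \<subseteq> X"
      using SPmem S'SP unfolding crp_def cr_def st_def Hs_def X_def Let_def by auto
    have fin: "finite X" by (rule finite_subset[of _ "{..<length S}"]) (auto simp: X_def)
    show ?thesis unfolding C_def crX using card_mono[OF fin sub] .
  qed
  define L where "L t = {t'\<in>S'. t \<le> t'}" for t
  define xs where "xs t = (if L t = {} then s else Min (Hs ` L t))" for t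
  have finL: "finite (L t)" for t using finS' unfolding L_def by simp
  have P1: "r \<le> xs t \<and> xs t \<le> s" for t
  proof (cases "L t = {}")
    case True then show ?thesis using assms(5) unfolding xs_def by simp
  next
    case False
    have "Min (Hs ` L t) \<in> Hs ` L t" using False finL by (intro Min_in) auto
    then obtain t' where "t' \<in> L t" "xs t = Hs t'" using False unfolding xs_def by auto
    then show ?thesis using SPmem[of t'] S'SP unfolding L_def by auto
  qed
  have P2: "xs t \<le> xs (Suc t)" for t
  proof (cases "L (Suc t) = {}")
    case True then show ?thesis using P1[of t] unfolding xs_def[of "Suc t"] by simp
  next
    case False
    have sub: "L (Suc t) \<subseteq> L t" unfolding L_def by auto
    then have ne: "L t \<noteq> {}" using False by auto
    have "Min (Hs ` L t) \<le> Min (Hs ` L (Suc t))"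
      by (rule Min_antimono) (use sub False finL in auto)
    then show ?thesis unfolding xs_def using False ne by simp
  qed
  have P3: "t \<in> S' \<Longrightarrow> xs t \<le> Hs t" for t
  proof -
    assume t: "t \<in> S'"
    then have tL: "t \<in> L t" unfolding L_def by simp
    then have "Min (Hs ` L t) \<le> Hs t" using finL by (intro Min_le) auto
    then show ?thesis using tL unfolding xs_def by auto
  qed
  have P4: "t \<in> SP \<Longrightarrow> xs t \<le> Hs t \<Longrightarrow> t \<in> S'" for t
  proof -
    assume t: "t \<in> SP" and le: "xs t \<le> Hs t"
    show "t \<in> S'"
    proof (cases "L t = {}")
      case True then show ?thesis using le SPmem[OF t] unfolding xs_def by simp
    next
      case False
      have "Min (Hs ` L t) \<in> Hs ` L t" using False finL by (intro Min_in) auto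
      then obtain t' where t': "t' \<in> L t" "xs t = Hs t'" using False unfolding xs_def by auto
      show ?thesis
      proof (cases "t = t'")
        case True then show ?thesis using t' unfolding L_def by simp
      next
        case False
        then have "t < t'" "t' \<in> S'" using t' unfolding L_def by auto
        then show ?thesis using dcl[of t' t] t le t' by simp
      qed
    qed
  qed
  have inv: "t \<le> length S \<Longrightarrow> tinv h (st t)" for t
    unfolding st_def by (rule sb_inv[OF assms(2) assms(3)])
  have finG: "t \<le> length S \<Longrightarrow> finite (G h (st t) x s)" for t x
    using inv[of t] G_fin unfolding tinv_def by blast
  have claim: "t \<le> length S \<Longrightarrow>
     int (card (G h (st t) (xs t) s)) + int (card {t'\<in>S'. t' < t \<and> is_ins (S ! t')})
       - int (card {t'\<in>S'. t' < t \<and> \<not> is_ins (S ! t')})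
       - int (card {t'\<in>S'. t' < t \<and> (is_ins (S ! t') \<and> crp t')}) \<le> int f" for t
  proof (induction t)
    case 0
    have st0: "st 0 = T0" unfolding st_def state_before_def by simp
    have notomb: "\<forall>p. \<not> is_tomb (T0 p)" using assms(2) unfolding valid_init_def by (elim conjE)
    have Gr: "G h T0 r s = {p. r \<le> p \<and> p < s \<and> T0 p = Free}"
      unfolding G_def using notomb by auto
    have "card (G h T0 (xs 0) s) \<le> card (G h T0 r s)"
      using finG[of 0 r] st0 G_mono[of r "xs 0"] P1[of 0] by (intro card_mono) auto
    then show ?case using Gr st0 unfolding f_def by simp
  next
    case (Suc t)
    then have tl: "t < length S" by simp
    define T where "T = st t"
    define T' where "T' = st (Suc t)"
    have TT': "T' = step h T (S ! t)" unfolding T'_def T_def st_def using sbSuc[OF tl] by simp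
    have invT: "tinv h T" unfolding T_def using inv tl by simp
    have finT: "finite (G h T y s)" for y unfolding T_def using finG tl by simp
    have finT': "finite (G h T' y s)" for y unfolding T'_def using finG Suc.prems by simp
    define x where "x = xs t"
    have g1: "card (G h T' (xs (Suc t)) s) \<le> card (G h T' x s)"
      unfolding x_def by (rule card_mono[OF finT' G_mono[OF P2[of t]]])
    have key: "int (card (G h T' x s)) \<le> int (card (G h T x s))
        - (if t \<in> S' \<and> is_ins (S ! t) then 1 else 0)
        + (if t \<in> S' \<and> \<not> is_ins (S ! t) then 1 else 0)
        + (if t \<in> S' \<and> (is_ins (S ! t) \<and> crp t) then 1 else 0)"
    proof (cases "S ! t")
      case (Ins u)
      have GT': "G h T' x s = G h T x s - {ins_end h T u}"
        using TT' Ins G_insert[OF invT] by simp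
      have le: "card (G h T' x s) \<le> card (G h T x s)"
        unfolding GT' by (rule card_Diff1_le)
      show ?thesis
      proof (cases "t \<in> S' \<and> \<not> crp t")
        case True
        have hu: "x \<le> h u" "h u < s" using P3[of t] SPmem[of t] S'SP True Ins
          unfolding x_def Hs_def by auto
        have ncr: "\<not> cr h T u s" using True Ins unfolding crp_def T_def by simp
        have mem: "ins_end h T u \<in> G h T x s" by (rule G_insert_mem[OF invT hu ncr])
        have "card (G h T' x s) = card (G h T x s) - 1" unfolding GT' using mem finT by simp
        moreover have "card (G h T x s) \<ge> 1" using mem finT
          by (metis One_nat_def Suc_leI card_gt_0_iff empty_iff)
        ultimately show ?thesis using True Ins by simp
      next
        case False
        then show ?thesis using le Ins by auto
      qed
    next
      case (Del u)
      define K where "K = {p. T p = Key u \<and> x \<le> h u \<and> h u < s}"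
      have sub: "G h T' x s \<subseteq> G h T x s \<union> K" using TT' Del G_delete unfolding K_def by simp
      have finNF: "finite {p. T p \<noteq> Free}" using invT unfolding tinv_def by (elim conjE)
      have finK: "finite K" unfolding K_def by (rule finite_subset[OF _ finNF]) auto
      have "card (G h T' x s) \<le> card (G h T x s \<union> K)"
        using sub finT finK by (intro card_mono) auto
      also have "\<dots> \<le> card (G h T x s) + card K" by (rule card_Un_le)
      finally have c1: "card (G h T' x s) \<le> card (G h T x s) + card K" .
      show ?thesis
      proof (cases "t \<in> S'")
        case True
        have "card K \<le> 1" unfolding K_def by (rule K_card[OF invT])
        then show ?thesis using c1 True Del by simp
      next
        case False
        have "K = {}"
        proof (rule ccontr)
          assume "K \<noteq> {}"
          then have hu: "x \<le> h u" "h u < s" unfolding K_def by auto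
          have "r \<le> x" using P1 unfolding x_def by simp
          then have "t \<in> SP" using hu tl Del unfolding SP_def S_P_def by auto
          moreover have "xs t \<le> Hs t" using hu Del unfolding x_def Hs_def by simp
          ultimately show False using P4 False by blast
        qed
        then show ?thesis using c1 False Del by simp
      qed
    qed
    have IH: "int (card (G h T x s)) + int (card {t'\<in>S'. t' < t \<and> is_ins (S ! t')})
       - int (card {t'\<in>S'. t' < t \<and> \<not> is_ins (S ! t')})
       - int (card {t'\<in>S'. t' < t \<and> (is_ins (S ! t') \<and> crp t')}) \<le> int f"
      using Suc.IH tl unfolding T_def x_def by simp
    note c1 = cnt_Suc[OF finS', of t "\<lambda>t'. is_ins (S ! t')"]
    note c2 = cnt_Suc[OF finS', of t "\<lambda>t'. \<not> is_ins (S ! t')"]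
    note c3 = cnt_Suc[OF finS', of t "\<lambda>t'. is_ins (S ! t') \<and> crp t'"]
    have "int (card (G h T' (xs (Suc t)) s)) \<le> int (card (G h T' x s))" using g1 by simp
    then show ?case using IH key c1 c2 c3 unfolding T'_def[symmetric]
      by (cases "t \<in> S'"; cases "is_ins (S ! t)"; cases "crp t"; simp)
  qed
  have fin_all: "{t'\<in>S'. t' < length S \<and> P t'} = {t'\<in>S'. P t'}" for P
    using S'SP SPsub by auto
  have main: "int I - int D - int C \<le> int f"
    using claim[of "length S"] unfolding fin_all I_def D_def C_def by simp
  show ?thesis
  proof (cases "int I - int D \<le> 0")
    case True
    then show ?thesis using qdef ss by simp
  next
    case False
    then show ?thesis using qdef ss main Ccross by simp
  qed
qed


end
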